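(* Let $d_1>d_2>1$ and $f\ge0$ be integers, let $n=d_1+d_2+f$, and let $\beta\in\mathcal S_n$ have cycle structure $d_1\cdot d_2\cdot1^f$ (one $d_1$-cycle, one $d_2$-cycle, $f$ fixed points). Then $(\varepsilon,\beta,\beta;(12))\in\mathrm{Par}(n)$ if and only if $d_1/d_2$ is an odd integer and $f=0$.
   Context: A Latin square of order $n$ is an $n\times n$ array with rows, columns and symbols indexed by $[n]$, each symbol occurring once in each row and each column, with triple set $O(L)$. Permutations act on the right; $\varepsilon$ is the identity. A paratopism $(\alpha,\beta,\gamma;(12))$ maps $L$ to $L^\sigma$ with triple set $\{(y\beta,x\alpha,z\gamma):(x,y,z)\in O(L)\}$; it is an autoparatopism of $L$ if $L^\sigma=L$. $\mathrm{Par}(n)$ is the set of paratopisms that are autoparatopisms of at least one Latin square of order $n$. *)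

theory Defs
  imports "HOL-Combinatorics.Orbits" "HOL-Combinatorics.Permutations"
begin

definition latin_square :: "nat \<Rightarrow> (nat \<times> nat \<times> nat) set \<Rightarrow> bool" where
  "latin_square n L \<longleftrightarrow>
     L \<subseteq> {1..n} \<times> {1..n} \<times> {1..n} \<and>
     (\<forall>x\<in>{1..n}. \<forall>y\<in>{1..n}. \<exists>!z. (x, y, z) \<in> L) \<and>
     (\<forall>x\<in>{1..n}. \<forall>z\<in>{1..n}. \<exists>!y. (x, y, z) \<in> L) \<and>
     (\<forall>y\<in>{1..n}. \<forall>z\<in>{1..n}. \<exists>!x. (x, y, z) \<in> L)"

definition paratopism12_image ::
  "(nat \<Rightarrow> nat) \<Rightarrow> (nat \<Rightarrow> nat) \<Rightarrow> (nat \<Rightarrow> nat) \<Rightarrow> (nat \<times> nat \<times> nat) set \<Rightarrow> (nat \<times> nat \<times> nat) set" where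
  "paratopism12_image \<alpha> \<beta> \<gamma> L = {(\<beta> y, \<alpha> x, \<gamma> z) | x y z. (x, y, z) \<in> L}"

definition autoparatopism12 ::
  "nat \<Rightarrow> (nat \<Rightarrow> nat) \<Rightarrow> (nat \<Rightarrow> nat) \<Rightarrow> (nat \<Rightarrow> nat) \<Rightarrow> (nat \<times> nat \<times> nat) set \<Rightarrow> bool" where
  "autoparatopism12 n \<alpha> \<beta> \<gamma> L \<longleftrightarrow>
     \<alpha> permutes {1..n} \<and> \<beta> permutes {1..n} \<and> \<gamma> permutes {1..n} \<and>
     paratopism12_image \<alpha> \<beta> \<gamma> L = L"

definition in_Par12 :: "nat \<Rightarrow> (nat \<Rightarrow> nat) \<Rightarrow> (nat \<Rightarrow> nat) \<Rightarrow> (nat \<Rightarrow> nat) \<Rightarrow> bool" where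
  "in_Par12 n \<alpha> \<beta> \<gamma> \<longleftrightarrow> (\<exists>L. latin_square n L \<and> autoparatopism12 n \<alpha> \<beta> \<gamma> L)"

definition cycle_structure_2 :: "nat \<Rightarrow> (nat \<Rightarrow> nat) \<Rightarrow> nat \<Rightarrow> nat \<Rightarrow> nat \<Rightarrow> bool" where
  "cycle_structure_2 n \<beta> d1 d2 f \<longleftrightarrow>
     \<beta> permutes {1..n} \<and>
     (\<exists>A B. A \<subseteq> {1..n} \<and> B \<subseteq> {1..n} \<and> A \<inter> B = {} \<and>
        card A = d1 \<and> card B = d2 \<and> cyclic_on \<beta> A \<and> cyclic_on \<beta> B \<and>
        card ({1..n} - (A \<union> B)) = f \<and>
        (\<forall>x\<in>{1..n} - (A \<union> B). \<beta> x = x))"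

end

theory Submission
  imports Defs
begin


lemma cyc_facts:
  assumes perm: "permutation \<beta>" and cyc: "cyclic_on \<beta> A" and cA: "card A = d" and x: "x \<in> A"
  shows "((\<beta>^^k) x = x) \<longleftrightarrow> d dvd k"
    and "bij_betw (\<lambda>i. (\<beta>^^i) x) {0..<d} A"
proof -
  have Ax: "A = orbit \<beta> x" using cyc x by (simp add: cyclic_on_alldef)
  have xo: "x \<in> orbit \<beta> x" by (rule permutation_self_in_orbit[OF perm])
  define p where "p = funpow_dist1 \<beta> x x"
  have img: "A = (\<lambda>i. (\<beta>^^i) x) ` {0..<p}" using orbit_conv_funpow_dist1[OF xo] Ax p_def by simp
  have inj: "inj_on (\<lambda>i. (\<beta>^^i) x) {0..<p}" using inj_on_funpow_dist1[OF xo] p_def by simp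
  have "card A = p" using img inj by (simp add: card_image)
  hence pd: "p = d" using cA by simp
  have dx: "(\<beta>^^d) x = x" using funpow_dist1_prop[OF xo] p_def pd by simp
  have d0: "d > 0" using pd p_def by simp
  show "bij_betw (\<lambda>i. (\<beta>^^i) x) {0..<d} A" using img inj pd by (simp add: bij_betw_def)
  show "((\<beta>^^k) x = x) \<longleftrightarrow> d dvd k"
  proof
    assume h: "(\<beta>^^k) x = x"
    have "(\<beta>^^(k mod d)) x = (\<beta>^^0) x" using funpow_mod_eq[OF dx, of k] h by simp
    moreover have "k mod d < d" using d0 by simp
    ultimately have "k mod d = 0" using inj pd d0 unfolding inj_on_def by fastforce
    thus "d dvd k" by auto
  next
    assume "d dvd k"
    then obtain m where "k = d * m" by auto
    thus "(\<beta>^^k) x = x" using funpow_mod_eq[OF dx, of k] by simp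
  qed
qed

lemma cyc_in: "cyclic_on \<beta> A \<Longrightarrow> x \<in> A \<Longrightarrow> (\<beta>^^k) x \<in> A"
  by (rule cyclic_on_funpow_in)

lemma funpow_comm: "(f^^m) ((f^^k) x) = (f^^(m+k)) x"
  by (simp add: funpow_add)

lemma odd_involution_fix:
  assumes "finite S" "\<forall>x\<in>S. g x \<in> S \<and> g (g x) = x" "odd (card S)"
  shows "\<exists>x\<in>S. g x = x"
  using assms
proof (induction "card S" arbitrary: S rule: less_induct)
  case less
  show ?case
  proof (rule ccontr)
    assume nf: "\<not> (\<exists>x\<in>S. g x = x)"
    have "S \<noteq> {}" using less.prems(3) by auto
    then obtain x where x: "x \<in> S" by auto
    have gx: "g x \<in> S" "g x \<noteq> x" using x less.prems(2) nf by auto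
    define S' where "S' = S - {x, g x}"
    have c: "card S' = card S - 2" using x gx less.prems(1) unfolding S'_def
      by (simp add: card_Diff_subset)
    have c2: "card S \<ge> 2"
    proof -
      have "{x, g x} \<subseteq> S" using x gx by auto
      hence "card {x, g x} \<le> card S" using less.prems(1) by (rule card_mono[rotated])
      thus ?thesis using gx by simp
    qed
    have "\<forall>y\<in>S'. g y \<in> S' \<and> g (g y) = y"
    proof
      fix y assume y: "y \<in> S'"
      have "g y \<in> S" "g (g y) = y" using y less.prems(2) unfolding S'_def by auto
      moreover have "g y \<noteq> x" using y less.prems(2) x unfolding S'_def by (metis DiffE insertCI)
      moreover have "g y \<noteq> g x" using y less.prems(2) x unfolding S'_def by (metis DiffE insertCI)
      ultimately show "g y \<in> S' \<and> g (g y) = y" unfolding S'_def by auto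
    qed
    moreover have "odd (card S')" using c c2 less.prems(3) by auto
    moreover have "card S' < card S" using c c2 by simp
    moreover have "finite S'" using less.prems(1) S'_def by simp
    ultimately obtain y where "y \<in> S'" "g y = y" using less.hyps by blast
    thus False using nf S'_def by auto
  qed
qed



locale cs2 =
  fixes n :: nat and \<beta> :: "nat \<Rightarrow> nat" and d1 d2 f :: nat and A B :: "nat set"
  assumes perm: "\<beta> permutes {1..n}"
    and AsubB: "A \<subseteq> {1..n}" "B \<subseteq> {1..n}" "A \<inter> B = {}"
    and cards: "card A = d1" "card B = d2"
    and cycs: "cyclic_on \<beta> A" "cyclic_on \<beta> B"
    and cardF: "card ({1..n} - (A \<union> B)) = f"
    and fixF: "\<forall>x\<in>{1..n} - (A \<union> B). \<beta> x = x"
    and dd: "d1 > d2" "d2 > 1" "n = d1 + d2 + f"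
begin

definition "F = {1..n} - (A \<union> B)"

lemma permb: "permutation \<beta>"
  using perm by (rule permutes_imp_permutation[rotated]) simp

lemma powA: "x \<in> A \<Longrightarrow> ((\<beta>^^k) x = x) \<longleftrightarrow> d1 dvd k"
  using cyc_facts(1)[OF permb cycs(1) cards(1)] by blast

lemma powB: "x \<in> B \<Longrightarrow> ((\<beta>^^k) x = x) \<longleftrightarrow> d2 dvd k"
  using cyc_facts(1)[OF permb cycs(2) cards(2)] by blast

lemma powF: "x \<in> F \<Longrightarrow> (\<beta>^^k) x = x"
  using fixF unfolding F_def by (induction k) auto

lemma inA: "x \<in> A \<Longrightarrow> (\<beta>^^k) x \<in> A"
  using cycs(1) by (rule cyc_in)

lemma inB: "x \<in> B \<Longrightarrow> (\<beta>^^k) x \<in> B"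
  using cycs(2) by (rule cyc_in)

lemma finA: "finite A" using finite_subset[OF AsubB(1)] by simp
lemma finB: "finite B" using finite_subset[OF AsubB(2)] by simp
lemma finF: "finite F" unfolding F_def by simp

lemma cardF': "card F = f" using cardF F_def by simp

lemma parts: "x \<in> {1..n} \<Longrightarrow> x \<in> A \<or> x \<in> B \<or> x \<in> F"
  unfolding F_def by auto

lemma disj: "A \<inter> F = {}" "B \<inter> F = {}" "A \<inter> B = {}"
  using AsubB unfolding F_def by auto

lemma fixset_eq:
  "{y \<in> {1..n}. (\<beta>^^k) y = y} = (if d1 dvd k then A else {}) \<union> (if d2 dvd k then B else {}) \<union> F"
proof (rule set_eqI)
  fix y
  show "y \<in> {y \<in> {1..n}. (\<beta>^^k) y = y} \<longleftrightarrow> y \<in> (if d1 dvd k then A else {}) \<union> (if d2 dvd k then B else {}) \<union> F"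
  proof (cases "y \<in> {1..n}")
    case False thus ?thesis using AsubB unfolding F_def by auto
  next
    case True
    then consider "y \<in> A" | "y \<in> B" | "y \<in> F" using parts by blast
    thus ?thesis
    proof cases
      case 1 thus ?thesis using powA[of y k] disj True by auto
    next
      case 2 thus ?thesis using powB[of y k] disj True by auto
    next
      case 3 thus ?thesis using powF[of y k] disj True by auto
    qed
  qed
qed

lemma fixset_card:
  "card {y \<in> {1..n}. (\<beta>^^k) y = y} = (if d1 dvd k then d1 else 0) + (if d2 dvd k then d2 else 0) + f"
proof -
  have c1: "card ((if d1 dvd k then A else {}) \<union> (if d2 dvd k then B else {})) = (if d1 dvd k then d1 else 0) + (if d2 dvd k then d2 else 0)"
    using finA finB disj cards by (simp add: card_Un_disjoint)
  have "card ((if d1 dvd k then A else {}) \<union> (if d2 dvd k then B else {}) \<union> F) = card ((if d1 dvd k then A else {}) \<union> (if d2 dvd k then B else {})) + card F"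
    by (rule card_Un_disjoint) (use finA finB finF disj in auto)
  thus ?thesis unfolding fixset_eq using c1 cardF' by simp
qed

end

locale cs2L = cs2 +
  fixes L :: "(nat \<times> nat \<times> nat) set"
  assumes lat: "latin_square n L" and ap: "autoparatopism12 n id \<beta> \<beta> L"
begin

lemma Lsub: "(x,y,z) \<in> L \<Longrightarrow> x \<in> {1..n} \<and> y \<in> {1..n} \<and> z \<in> {1..n}"
proof -
  assume h: "(x,y,z) \<in> L"
  have "L \<subseteq> {1..n} \<times> {1..n} \<times> {1..n}" using lat unfolding latin_square_def by (elim conjE)
  thus ?thesis using h by blast
qed

lemma L3: "x \<in> {1..n} \<Longrightarrow> y \<in> {1..n} \<Longrightarrow> \<exists>!z. (x,y,z) \<in> L"
  using lat unfolding latin_square_def by (elim conjE) simp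

lemma L2: "x \<in> {1..n} \<Longrightarrow> z \<in> {1..n} \<Longrightarrow> \<exists>!y. (x,y,z) \<in> L"
  using lat unfolding latin_square_def by (elim conjE) simp

lemma L1: "y \<in> {1..n} \<Longrightarrow> z \<in> {1..n} \<Longrightarrow> \<exists>!x. (x,y,z) \<in> L"
  using lat unfolding latin_square_def by (elim conjE) simp

lemma uz: "(x,y,z) \<in> L \<Longrightarrow> (x,y,z') \<in> L \<Longrightarrow> z = z'"
proof -
  assume h1: "(x,y,z) \<in> L" and h2: "(x,y,z') \<in> L"
  have "\<exists>!z. (x,y,z) \<in> L" using L3 Lsub[OF h1] by simp
  thus ?thesis using h1 h2 by (metis ex1E)
qed

lemma uy: "(x,y,z) \<in> L \<Longrightarrow> (x,y',z) \<in> L \<Longrightarrow> y = y'"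
proof -
  assume h1: "(x,y,z) \<in> L" and h2: "(x,y',z) \<in> L"
  have "\<exists>!y. (x,y,z) \<in> L" using L2 Lsub[OF h1] by simp
  thus ?thesis using h1 h2 by (metis ex1E)
qed

lemma ux: "(x,y,z) \<in> L \<Longrightarrow> (x',y,z) \<in> L \<Longrightarrow> x = x'"
proof -
  assume h1: "(x,y,z) \<in> L" and h2: "(x',y,z) \<in> L"
  have "\<exists>!x. (x,y,z) \<in> L" using L1 Lsub[OF h1] by simp
  thus ?thesis using h1 h2 by (metis ex1E)
qed

lemma ey: "x \<in> {1..n} \<Longrightarrow> z \<in> {1..n} \<Longrightarrow> \<exists>y. (x,y,z) \<in> L"
  using L2 by blast

lemma stepL: "(x,y,z) \<in> L \<Longrightarrow> (\<beta> y, x, \<beta> z) \<in> L"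
proof -
  assume "(x,y,z) \<in> L"
  hence "(\<beta> y, id x, \<beta> z) \<in> paratopism12_image id \<beta> \<beta> L"
    unfolding paratopism12_image_def by blast
  thus ?thesis using ap unfolding autoparatopism12_def by simp
qed

lemma powL: "(x,y,z) \<in> L \<Longrightarrow> ((\<beta>^^k) x, (\<beta>^^k) y, (\<beta>^^(2*k)) z) \<in> L"
proof (induction k)
  case 0 thus ?case by simp
next
  case (Suc k)
  hence "((\<beta>^^k) x, (\<beta>^^k) y, (\<beta>^^(2*k)) z) \<in> L" by simp
  hence "(\<beta> ((\<beta>^^k) x), \<beta> ((\<beta>^^k) y), \<beta> (\<beta> ((\<beta>^^(2*k)) z))) \<in> L"
    using stepL by blast
  thus ?case by simp
qed

lemma fix_le:
  assumes x: "x \<in> {1..n}" and kx: "(\<beta>^^k) x = x"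
  shows "card {s \<in> {1..n}. (\<beta>^^(2*k)) s = s} \<le> card {y \<in> {1..n}. (\<beta>^^k) y = y}"
proof -
  define g where "g s = (THE y. (x,y,s) \<in> L)" for s
  have gL: "s \<in> {1..n} \<Longrightarrow> (x, g s, s) \<in> L" for s
  proof -
    assume "s \<in> {1..n}"
    then obtain y where y: "(x,y,s) \<in> L" using ey x by blast
    hence "g s = y" unfolding g_def using uy by blast
    thus ?thesis using y by simp
  qed
  show ?thesis
  proof (rule card_inj_on_le)
    show "inj_on g {s \<in> {1..n}. (\<beta>^^(2*k)) s = s}"
    proof (rule inj_onI)
      fix s s' assume "s \<in> {s \<in> {1..n}. (\<beta>^^(2*k)) s = s}" "s' \<in> {s \<in> {1..n}. (\<beta>^^(2*k)) s = s}" "g s = g s'"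
      thus "s = s'" using gL uz by (metis (no_types, lifting) mem_Collect_eq)
    qed
    show "g ` {s \<in> {1..n}. (\<beta>^^(2*k)) s = s} \<subseteq> {y \<in> {1..n}. (\<beta>^^k) y = y}"
    proof
      fix y assume "y \<in> g ` {s \<in> {1..n}. (\<beta>^^(2*k)) s = s}"
      then obtain s where s: "s \<in> {1..n}" "(\<beta>^^(2*k)) s = s" "y = g s" by auto
      have L1: "(x, y, s) \<in> L" using gL s by simp
      have "((\<beta>^^k) x, (\<beta>^^k) y, (\<beta>^^(2*k)) s) \<in> L" using powL[OF L1] .
      hence "(x, (\<beta>^^k) y, s) \<in> L" using kx s by simp
      hence "(\<beta>^^k) y = y" using uy L1 by blast
      thus "y \<in> {y \<in> {1..n}. (\<beta>^^k) y = y}" using Lsub L1 by auto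
    qed
    show "finite {y \<in> {1..n}. (\<beta>^^k) y = y}" by simp
  qed
qed

end


context cs2L begin

lemma N0:
  assumes x: "x \<in> A" and L: "(x,y,z) \<in> L" and z: "z \<in> B \<or> z \<in> F"
  shows "y \<in> A"
proof (rule ccontr)
  assume yA: "y \<notin> A"
  have "y \<in> {1..n}" using Lsub[OF L] by simp
  hence "y \<in> B \<or> y \<in> F" using parts yA by blast
  hence y1: "(\<beta>^^d2) y = y"
  proof
    assume "y \<in> B" thus ?thesis using powB[of y d2] by simp
  next
    assume "y \<in> F" thus ?thesis using powF[of y d2] by simp
  qed
  have z1: "(\<beta>^^(2*d2)) z = z"
  proof (cases "z \<in> B")
    case True thus ?thesis using powB[of z "2*d2"] by simp
  next
    case False thus ?thesis using z powF[of z] by simp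
  qed
  have "((\<beta>^^d2) x, (\<beta>^^d2) y, (\<beta>^^(2*d2)) z) \<in> L" by (rule powL[OF L])
  hence "((\<beta>^^d2) x, y, z) \<in> L" using y1 z1 by simp
  hence "(\<beta>^^d2) x = x" using ux[OF _ L] by blast
  hence "d1 dvd d2" using powA[OF x] by simp
  thus False using dd by (simp add: nat_dvd_not_less)
qed

lemma A_ne: "A \<noteq> {}" using cards dd by auto
lemma B_ne: "B \<noteq> {}" using cards dd by auto

lemma N1: "d2 dvd 2*d1"
proof -
  obtain a where a: "a \<in> A" using A_ne by auto
  obtain b where b: "b \<in> B" using B_ne by auto
  have an: "a \<in> {1..n}" "b \<in> {1..n}" using a b AsubB by auto
  obtain y where L: "(a,y,b) \<in> L" using ey[OF an] by blast
  have yA: "y \<in> A" using N0[OF a L] b by simp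
  have "((\<beta>^^d1) a, (\<beta>^^d1) y, (\<beta>^^(2*d1)) b) \<in> L" by (rule powL[OF L])
  hence "(a, y, (\<beta>^^(2*d1)) b) \<in> L" using powA[OF a, of d1] powA[OF yA, of d1] by simp
  hence "(\<beta>^^(2*d1)) b = b" using uz[OF L] by metis
  thus ?thesis using powB[OF b] by simp
qed

lemma N2: "d2 dvd d1"
proof (rule ccontr)
  assume nd: "\<not> d2 dvd d1"
  obtain a where a: "a \<in> A" using A_ne by auto
  have an: "a \<in> {1..n}" using a AsubB by auto
  have "card {s \<in> {1..n}. (\<beta>^^(2*d1)) s = s} \<le> card {y \<in> {1..n}. (\<beta>^^d1) y = y}"
    using fix_le[OF an] powA[OF a, of d1] by simp
  thus False unfolding fixset_card using N1 nd dd by simp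
qed

lemma N3: "odd (d1 div d2)"
proof (rule ccontr)
  assume ev: "\<not> odd (d1 div d2)"
  define q where "q = d1 div d2"
  have d1q: "d1 = d2 * q" using N2 q_def by simp
  have q1: "q \<ge> 1"
  proof (rule ccontr)
    assume "\<not> q \<ge> 1" hence "q = 0" by simp
    thus False using d1q dd by simp
  qed
  have evq: "even q" using ev q_def by simp
  have q2: "q \<ge> 2" using q1 evq by presburger
  define k where "k = d2 * (q div 2)"
  have "2 * (q div 2) = q" using ev q_def by simp
  hence k2: "2 * k = d1" using d1q k_def by (metis mult.left_commute)
  have kpos: "0 < k" using k_def q2 dd by simp
  have kl: "k < d1" using k2 kpos by simp
  have nk: "\<not> d1 dvd k" using kpos kl by (simp add: nat_dvd_not_less)
  have dk: "d2 dvd k" using k_def by simp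
  obtain b where b: "b \<in> B" using B_ne by auto
  have bn: "b \<in> {1..n}" using b AsubB by auto
  have "card {s \<in> {1..n}. (\<beta>^^(2*k)) s = s} \<le> card {y \<in> {1..n}. (\<beta>^^k) y = y}"
    using fix_le[OF bn] powB[OF b, of k] dk by simp
  thus False unfolding fixset_card using nk dk k2 N2 dd by simp
qed

end


context cs2L begin

definition "colf x z = (THE y. (x,y,z) \<in> L)"

lemma colf: "x \<in> {1..n} \<Longrightarrow> z \<in> {1..n} \<Longrightarrow> (x, colf x z, z) \<in> L"
proof -
  assume "x \<in> {1..n}" "z \<in> {1..n}"
  then obtain y where y: "(x,y,z) \<in> L" using ey by blast
  hence "colf x z = y" unfolding colf_def using uy by blast
  thus ?thesis using y by simp
qed

lemma colf_eq: "(x,y,z) \<in> L \<Longrightarrow> colf x z = y"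
  unfolding colf_def using uy by blast

lemma cardS:
  assumes T: "T \<subseteq> B \<union> F"
  shows "card {p \<in> A \<times> A. \<exists>z\<in>T. (fst p, snd p, z) \<in> L} = d1 * card T"
proof -
  have Tn: "T \<subseteq> {1..n}" using T AsubB unfolding F_def by auto
  have finT: "finite T" using Tn finite_subset by blast
  have cA: "x \<in> A \<Longrightarrow> z \<in> T \<Longrightarrow> colf x z \<in> A \<and> (x, colf x z, z) \<in> L" for x z
  proof -
    assume x: "x \<in> A" and z: "z \<in> T"
    have xn: "x \<in> {1..n}" using x AsubB by auto
    have zn: "z \<in> {1..n}" using z Tn by auto
    have L: "(x, colf x z, z) \<in> L" using colf[OF xn zn] .
    have "z \<in> B \<or> z \<in> F" using z T by auto
    thus ?thesis using N0[OF x L] L by simp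
  qed
  have eq: "{p \<in> A \<times> A. \<exists>z\<in>T. (fst p, snd p, z) \<in> L} = Sigma A (\<lambda>x. colf x ` T)"
  proof (rule set_eqI)
    fix p :: "nat \<times> nat"
    obtain x y where p: "p = (x,y)" by (cases p)
    show "p \<in> {p \<in> A \<times> A. \<exists>z\<in>T. (fst p, snd p, z) \<in> L} \<longleftrightarrow> p \<in> Sigma A (\<lambda>x. colf x ` T)"
    proof
      assume "p \<in> {p \<in> A \<times> A. \<exists>z\<in>T. (fst p, snd p, z) \<in> L}"
      then obtain z where "x \<in> A" "y \<in> A" "z \<in> T" "(x,y,z) \<in> L" using p by auto
      thus "p \<in> Sigma A (\<lambda>x. colf x ` T)" using p colf_eq by force
    next
      assume "p \<in> Sigma A (\<lambda>x. colf x ` T)"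
      then obtain z where "x \<in> A" "z \<in> T" "y = colf x z" using p by auto
      thus "p \<in> {p \<in> A \<times> A. \<exists>z\<in>T. (fst p, snd p, z) \<in> L}" using p cA by auto
    qed
  qed
  have ci: "x \<in> A \<Longrightarrow> card (colf x ` T) = card T" for x
  proof -
    assume x: "x \<in> A"
    have "inj_on (colf x) T"
    proof (rule inj_onI)
      fix z z' assume "z \<in> T" "z' \<in> T" "colf x z = colf x z'"
      thus "z = z'" using cA[OF x] uz by metis
    qed
    thus ?thesis by (simp add: card_image)
  qed
  have "card (Sigma A (\<lambda>x. colf x ` T)) = (\<Sum>x\<in>A. card (colf x ` T))"
    using finA finT by simp
  also have "\<dots> = (\<Sum>x\<in>A. card T)" using ci by simp
  also have "\<dots> = d1 * card T" using cards by simp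
  finally show ?thesis using eq by simp
qed

lemma N4: "f = 0"
proof (rule ccontr)
  assume f0: "f \<noteq> 0"
  hence "F \<noteq> {}" using cardF' by auto
  then obtain x0 where x0: "x0 \<in> F" by auto
  have x0n: "x0 \<in> {1..n}" using x0 unfolding F_def by auto
  have od1: "odd d1"
  proof
    assume ev: "even d1"
    define k where "k = d1 div 2"
    have k2: "2 * k = d1" using ev k_def by simp
    have kpos: "0 < k" using k2 dd by simp
    have kl: "k < d1" using k2 kpos by simp
    have nk: "\<not> d1 dvd k" using kpos kl by (simp add: nat_dvd_not_less)
    have "card {s \<in> {1..n}. (\<beta>^^(2*k)) s = s} \<le> card {y \<in> {1..n}. (\<beta>^^k) y = y}"
      using fix_le[OF x0n] powF[OF x0, of k] by simp
    thus False unfolding fixset_card using nk k2 N2 dd by (simp split: if_splits)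
  qed
  have od2: "odd d2"
  proof
    assume ev: "even d2"
    define k where "k = d2 div 2"
    have k2: "2 * k = d2" using ev k_def by simp
    have kpos: "0 < k" using k2 dd by simp
    have kl: "k < d2" using k2 kpos by simp
    have nk: "\<not> d2 dvd k" using kpos kl by (simp add: nat_dvd_not_less)
    have nk1: "\<not> d1 dvd k" using kpos kl dd by (simp add: nat_dvd_not_less)
    have nk2: "\<not> d1 dvd d2" using dd by (simp add: nat_dvd_not_less)
    have "card {s \<in> {1..n}. (\<beta>^^(2*k)) s = s} \<le> card {y \<in> {1..n}. (\<beta>^^k) y = y}"
      using fix_le[OF x0n] powF[OF x0, of k] by simp
    thus False unfolding fixset_card using nk nk1 nk2 k2 dd by simp
  qed
  define h where "h = d1 div 2"
  have h2: "Suc (2 * h) = d1" using od1 h_def by simp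
  define tau where "tau p = ((\<beta>^^(h+1)) (snd p), (\<beta>^^h) (fst p))" for p :: "nat \<times> nat"
  have tauL: "((\<beta>^^(h+1)) y, (\<beta>^^h) x, (\<beta>^^d1) z) \<in> L" if L: "(x,y,z) \<in> L" for x y z
  proof -
    have "((\<beta>^^h) (\<beta> y), (\<beta>^^h) x, (\<beta>^^(2*h)) (\<beta> z)) \<in> L" using powL[OF stepL[OF L]] .
    moreover have "(\<beta>^^h) (\<beta> y) = (\<beta>^^(h+1)) y" by (simp add: funpow_Suc_right del: funpow.simps)
    moreover have "(\<beta>^^(2*h)) (\<beta> z) = (\<beta>^^d1) z" using h2[symmetric] by (simp add: funpow_Suc_right del: funpow.simps)
    ultimately show ?thesis by simp
  qed
  have fixpt: "\<exists>x\<in>A. \<exists>z\<in>T. (x, (\<beta>^^h) x, z) \<in> L"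
    if T: "T \<subseteq> B \<union> F" and Tc: "\<forall>z\<in>T. (\<beta>^^d1) z \<in> T" and od: "odd (card T)" for T
  proof -
    define S where "S = {p \<in> A \<times> A. \<exists>z\<in>T. (fst p, snd p, z) \<in> L}"
    have cS: "card S = d1 * card T" using cardS[OF T] S_def by simp
    have finS: "finite S" using finA S_def by (simp add: finite_subset[of S "A \<times> A"] subset_iff)
    have inv: "\<forall>p\<in>S. tau p \<in> S \<and> tau (tau p) = p"
    proof
      fix p assume p: "p \<in> S"
      obtain x y where xy: "p = (x,y)" by (cases p)
      obtain z where xyz: "x \<in> A" "y \<in> A" "z \<in> T" "(x,y,z) \<in> L" using p xy S_def by auto
      have a1: "(\<beta>^^(h+1)) y \<in> A" "(\<beta>^^h) x \<in> A"
        by (rule inA[OF xyz(2)], rule inA[OF xyz(1)])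
      have "tau p \<in> S" unfolding S_def tau_def xy using tauL[OF xyz(4)] a1 xyz Tc
        by (simp del: funpow.simps) blast
      moreover have "tau (tau p) = p"
      proof -
        have "tau (tau p) = ((\<beta>^^(h+1)) ((\<beta>^^h) x), (\<beta>^^h) ((\<beta>^^(h+1)) y))"
          unfolding tau_def xy by simp
        also have "\<dots> = ((\<beta>^^d1) x, (\<beta>^^d1) y)"
        proof -
          have e1: "h+1+h = d1" "h+(h+1) = d1" using h2 by auto
          show ?thesis by (simp only: funpow_comm e1)
        qed
        also have "\<dots> = p" using xy powA xyz by simp
        finally show ?thesis .
      qed
      ultimately show "tau p \<in> S \<and> tau (tau p) = p" by simp
    qed
    have "odd (card S)" using cS od od1 by simp
    then obtain p where p: "p \<in> S" "tau p = p" using odd_involution_fix[OF finS inv] by blast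
    obtain x y where xy: "p = (x,y)" by (cases p)
    obtain z where xyz: "x \<in> A" "y \<in> A" "z \<in> T" "(x,y,z) \<in> L" using p xy S_def by auto
    have "y = (\<beta>^^h) x" using p(2) xy tau_def by simp
    thus ?thesis using xyz by blast
  qed
  obtain x1 z1 where x1: "x1 \<in> A" "z1 \<in> B" "(x1, (\<beta>^^h) x1, z1) \<in> L"
    using fixpt[of B] inB od2 cards by auto
  obtain x2 where x2: "x2 \<in> A" "(x2, (\<beta>^^h) x2, x0) \<in> L"
    using fixpt[of "{x0}"] x0 powF by auto
  have "A = orbit \<beta> x1" using cycs(1) x1(1) by (simp add: cyclic_on_alldef)
  hence "x2 \<in> {(\<beta>^^m) x1 | m. True}" using x2(1) orbit_altdef_permutation[OF permb] by simp
  then obtain j where j: "x2 = (\<beta>^^j) x1" by auto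
  have "((\<beta>^^j) x1, (\<beta>^^j) ((\<beta>^^h) x1), (\<beta>^^(2*j)) z1) \<in> L" using powL[OF x1(3)] .
  moreover have "(\<beta>^^j) ((\<beta>^^h) x1) = (\<beta>^^h) x2" using j by (simp add: funpow_comm add.commute)
  ultimately have "(x2, (\<beta>^^h) x2, (\<beta>^^(2*j)) z1) \<in> L" using j by simp
  hence "x0 = (\<beta>^^(2*j)) z1" using uz[OF x2(2)] by metis
  hence "x0 \<in> B" using inB[OF x1(2)] by simp
  thus False using x0 disj by auto
qed

end


lemma latin_from_fun:
  fixes E :: "'i \<Rightarrow> nat" and M :: "'i \<Rightarrow> 'i \<Rightarrow> 'i"
  assumes bij: "bij_betw E I {1..n}" and fin: "finite I"
    and Mcl: "\<And>u v. u \<in> I \<Longrightarrow> v \<in> I \<Longrightarrow> M u v \<in> I"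
    and rowinj: "\<And>u. u \<in> I \<Longrightarrow> inj_on (M u) I"
    and colinj: "\<And>v. v \<in> I \<Longrightarrow> inj_on (\<lambda>u. M u v) I"
  shows "latin_square n {(E u, E v, E (M u v)) | u v. u \<in> I \<and> v \<in> I}"
proof -
  define L where "L = {(E u, E v, E (M u v)) | u v. u \<in> I \<and> v \<in> I}"
  have memL: "t \<in> L \<longleftrightarrow> (\<exists>u\<in>I. \<exists>v\<in>I. t = (E u, E v, E (M u v)))" for t
    unfolding L_def by blast
  have Einj: "inj_on E I" and Eimg: "E ` I = {1..n}" using bij by (auto simp: bij_betw_def)
  have Ein: "u \<in> I \<Longrightarrow> E u \<in> {1..n}" for u using Eimg by auto
  have Esurj: "x \<in> {1..n} \<Longrightarrow> \<exists>u\<in>I. E u = x" for x using Eimg by (metis imageE)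
  have Eeq: "u \<in> I \<Longrightarrow> u' \<in> I \<Longrightarrow> E u = E u' \<Longrightarrow> u = u'" for u u'
    using Einj by (auto simp: inj_on_def)
  have rowsurj: "u \<in> I \<Longrightarrow> w \<in> I \<Longrightarrow> \<exists>v\<in>I. M u v = w" for u w
  proof -
    assume u: "u \<in> I" and w: "w \<in> I"
    have "M u ` I = I" using endo_inj_surj[OF fin _ rowinj[OF u]] Mcl u by auto
    thus ?thesis using w by (metis imageE)
  qed
  have colsurj: "v \<in> I \<Longrightarrow> w \<in> I \<Longrightarrow> \<exists>u\<in>I. M u v = w" for v w
  proof -
    assume v: "v \<in> I" and w: "w \<in> I"
    have "(\<lambda>u. M u v) ` I = I" using endo_inj_surj[OF fin _ colinj[OF v]] Mcl v by auto
    thus ?thesis using w by (metis imageE)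
  qed
  have rinj: "u \<in> I \<Longrightarrow> v \<in> I \<Longrightarrow> v' \<in> I \<Longrightarrow> M u v = M u v' \<Longrightarrow> v = v'" for u v v'
    using rowinj by (auto simp: inj_on_def)
  have cinj: "u \<in> I \<Longrightarrow> u' \<in> I \<Longrightarrow> v \<in> I \<Longrightarrow> M u v = M u' v \<Longrightarrow> u = u'" for u u' v
    using colinj by (auto simp: inj_on_def)
  have c1: "L \<subseteq> {1..n} \<times> {1..n} \<times> {1..n}"
    using Ein Mcl by (auto simp: memL)
  have c2: "\<forall>x\<in>{1..n}. \<forall>y\<in>{1..n}. \<exists>!z. (x, y, z) \<in> L"
  proof (intro ballI)
    fix x y assume x: "x \<in> {1..n}" and y: "y \<in> {1..n}"
    obtain u where u: "u \<in> I" "E u = x" using Esurj[OF x] by auto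
    obtain v where v: "v \<in> I" "E v = y" using Esurj[OF y] by auto
    show "\<exists>!z. (x, y, z) \<in> L"
    proof (rule ex1I[of _ "E (M u v)"])
      show "(x, y, E (M u v)) \<in> L" using u v by (auto simp: memL)
    next
      fix z assume "(x,y,z) \<in> L"
      then obtain u' v' where uv: "u' \<in> I" "v' \<in> I" "x = E u'" "y = E v'" "z = E (M u' v')"
        by (auto simp: memL)
      have "u' = u" using Eeq uv u by metis
      moreover have "v' = v" using Eeq uv v by metis
      ultimately show "z = E (M u v)" using uv by simp
    qed
  qed
  have c3: "\<forall>x\<in>{1..n}. \<forall>z\<in>{1..n}. \<exists>!y. (x, y, z) \<in> L"
  proof (intro ballI)
    fix x z assume x: "x \<in> {1..n}" and z: "z \<in> {1..n}"
    obtain u where u: "u \<in> I" "E u = x" using Esurj[OF x] by auto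
    obtain w where w: "w \<in> I" "E w = z" using Esurj[OF z] by auto
    obtain v where v: "v \<in> I" "M u v = w" using rowsurj[OF u(1) w(1)] by auto
    show "\<exists>!y. (x, y, z) \<in> L"
    proof (rule ex1I[of _ "E v"])
      show "(x, E v, z) \<in> L" using u v w by (auto simp: memL)
    next
      fix y assume "(x,y,z) \<in> L"
      then obtain u' v' where uv: "u' \<in> I" "v' \<in> I" "x = E u'" "y = E v'" "z = E (M u' v')"
        by (auto simp: memL)
      have uu: "u' = u" using Eeq uv u by metis
      have "M u v' = w" using Eeq[of "M u v'" w] Mcl uv w uu by auto
      hence "v' = v" using rinj[OF u(1) uv(2) v(1)] v by simp
      thus "y = E v" using uv by simp
    qed
  qed
  have c4: "\<forall>y\<in>{1..n}. \<forall>z\<in>{1..n}. \<exists>!x. (x, y, z) \<in> L"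
  proof (intro ballI)
    fix y z assume y: "y \<in> {1..n}" and z: "z \<in> {1..n}"
    obtain v where v: "v \<in> I" "E v = y" using Esurj[OF y] by auto
    obtain w where w: "w \<in> I" "E w = z" using Esurj[OF z] by auto
    obtain u where u: "u \<in> I" "M u v = w" using colsurj[OF v(1) w(1)] by auto
    show "\<exists>!x. (x, y, z) \<in> L"
    proof (rule ex1I[of _ "E u"])
      show "(E u, y, z) \<in> L" using u v w by (auto simp: memL)
    next
      fix x assume "(x,y,z) \<in> L"
      then obtain u' v' where uv: "u' \<in> I" "v' \<in> I" "x = E u'" "y = E v'" "z = E (M u' v')"
        by (auto simp: memL)
      have vv: "v' = v" using Eeq uv v by metis
      have "M u' v = w" using Eeq[of "M u' v" w] Mcl uv w vv by auto
      hence "u' = u" using cinj[OF uv(1) u(1) v(1)] u by simp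
      thus "x = E u" using uv by simp
    qed
  qed
  show ?thesis unfolding latin_square_def L_def[symmetric] using c1 c2 c3 c4 by blast
qed

lemma para_from_fun:
  fixes E :: "'i \<Rightarrow> nat" and M :: "'i \<Rightarrow> 'i \<Rightarrow> 'i"
  assumes s: "\<And>u. u \<in> I \<Longrightarrow> s u \<in> I" and ssurj: "\<And>u. u \<in> I \<Longrightarrow> \<exists>v\<in>I. s v = u"
    and comm: "\<And>u. u \<in> I \<Longrightarrow> E (s u) = \<beta> (E u)"
    and Mcl: "\<And>u v. u \<in> I \<Longrightarrow> v \<in> I \<Longrightarrow> M u v \<in> I"
    and eq: "\<And>u v. u \<in> I \<Longrightarrow> v \<in> I \<Longrightarrow> M (s v) u = s (M u v)"
  shows "paratopism12_image id \<beta> \<beta> {(E u, E v, E (M u v)) | u v. u \<in> I \<and> v \<in> I}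
         = {(E u, E v, E (M u v)) | u v. u \<in> I \<and> v \<in> I}"
proof -
  define L where "L = {(E u, E v, E (M u v)) | u v. u \<in> I \<and> v \<in> I}"
  have memL: "t \<in> L \<longleftrightarrow> (\<exists>u\<in>I. \<exists>v\<in>I. t = (E u, E v, E (M u v)))" for t
    unfolding L_def by blast
  have "paratopism12_image id \<beta> \<beta> L = L"
  proof (rule set_eqI)
    fix t
    show "t \<in> paratopism12_image id \<beta> \<beta> L \<longleftrightarrow> t \<in> L"
    proof
      assume "t \<in> paratopism12_image id \<beta> \<beta> L"
      then obtain x y z where t: "t = (\<beta> y, x, \<beta> z)" "(x,y,z) \<in> L"
        unfolding paratopism12_image_def by auto
      then obtain u v where uv: "u \<in> I" "v \<in> I" "x = E u" "y = E v" "z = E (M u v)"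
        by (auto simp: memL)
      have "t = (E (s v), E u, E (M (s v) u))"
        using t uv comm eq Mcl by simp
      thus "t \<in> L" using s uv by (auto simp: memL)
    next
      assume "t \<in> L"
      then obtain u v where uv: "u \<in> I" "v \<in> I" "t = (E u, E v, E (M u v))"
        by (auto simp: memL)
      obtain w where w: "w \<in> I" "s w = u" using ssurj[OF uv(1)] by auto
      have "t = (\<beta> (E w), id (E v), \<beta> (E (M v w)))"
        using uv w comm eq Mcl by auto
      moreover have "(E v, E w, E (M v w)) \<in> L" using uv w by (auto simp: memL)
      ultimately show "t \<in> paratopism12_image id \<beta> \<beta> L"
        unfolding paratopism12_image_def by blast
    qed
  qed
  thus ?thesis using L_def by simp
qed



lemma modd: "(m::int) dvd (a mod m - a)"
  by (simp add: mod_eq_dvd_iff[symmetric])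

lemma modeq_dvd: "(a::int) mod m = b mod m \<Longrightarrow> m dvd (a - b)"
  by (simp add: mod_eq_dvd_iff)

lemma dvd_small: "(m::int) dvd x \<Longrightarrow> -m < x \<Longrightarrow> x < m \<Longrightarrow> x = 0"
  using dvd_imp_le_int by force

lemma dvd_between: "(m::int) dvd x \<Longrightarrow> m < x \<Longrightarrow> x < 2*m \<Longrightarrow> False"
proof -
  assume a: "m dvd x" "m < x" "x < 2*m"
  have "m dvd (x - m)" using a(1) by simp
  hence "x - m = 0" using dvd_small[of m "x - m"] a by linarith
  thus False using a by simp
qed

lemma odd_cancel:
  fixes d q x :: int
  assumes "odd q" "(d*q) dvd (2*x)" "d dvd x"
  shows "(d*q) dvd x"
proof -
  obtain u where u: "x = d * u" using assms(3) by auto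
  have "(d*q) dvd (d*(2*u))" using assms(2) u by (simp add: algebra_simps)
  hence "d = 0 \<or> q dvd 2*u" by (simp only: dvd_mult_cancel_left)
  moreover have "coprime q 2" using assms(1) by simp
  moreover have "q dvd 2*u \<longleftrightarrow> q dvd u" using coprime_dvd_mult_right_iff[OF \<open>coprime q 2\<close>, of u] by simp
  ultimately have "d = 0 \<or> q dvd u" by blast
  thus ?thesis using u by auto
qed

locale cons =
  fixes d q :: int
  assumes dpos: "d > 0" and qodd: "odd q" and qpos: "q > 0"
begin

definition "D = d * q"
definition "h = (D - d) div 2"

lemma Dpos: "D > 0" using dpos qpos D_def by simp
lemma dD: "d dvd D" using D_def by simp
lemma D_eq: "D = 2*h + d"
proof -
  have "D - d = d * (q - 1)" using D_def by (simp add: algebra_simps)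
  moreover have "even (q - 1)" using qodd by simp
  ultimately have "even (D - d)" by simp
  thus ?thesis using h_def by simp
qed
lemma h_nonneg: "h \<ge> 0"
proof -
  have "q \<ge> 1" using qpos by simp
  hence "D \<ge> d" using D_def dpos by (simp add: mult_le_cancel_left1)
  thus ?thesis using D_eq by simp
qed

lemma dvdD_d: "D dvd x \<Longrightarrow> d dvd x" using dD dvd_trans by blast

definition MA :: "int \<Rightarrow> int \<Rightarrow> bool \<times> int" where
  "MA i k = (if h \<le> (k - i) mod D \<and> (k - i) mod D < h + d then (False, (i + k) mod d)
             else (True, (i + k + h + 1) mod D))"
definition MAB :: "int \<Rightarrow> int \<Rightarrow> bool \<times> int" where
  "MAB i j = (True, (2*i - (i - j) mod d) mod D)"
definition MBA :: "int \<Rightarrow> int \<Rightarrow> bool \<times> int" where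
  "MBA j i = (True, (2*i + 1 - (i + 1 - j) mod d) mod D)"
definition MBB :: "int \<Rightarrow> int \<Rightarrow> bool \<times> int" where
  "MBB j j' = (False, (j + j') mod d)"

lemma MA_inj:
  assumes r: "0 \<le> i" "i < D" "0 \<le> k" "k < D" "0 \<le> i'" "i' < D" "0 \<le> k'" "k' < D"
    and eq: "MA i k = MA i' k'" and same: "i = i' \<or> k = k'"
  shows "i = i' \<and> k = k'"
proof -
  define c where "c = (k - i) mod D"
  define c' where "c' = (k' - i') mod D"
  have cr: "0 \<le> c" "c < D" "0 \<le> c'" "c' < D" using Dpos c_def c'_def by auto
  have dc: "D dvd (c - (k - i))" "D dvd (c' - (k' - i'))" using modd c_def c'_def by auto
  show ?thesis
  proof (cases "h \<le> c \<and> c < h + d")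
    case True
    hence T': "h \<le> c' \<and> c' < h + d" using eq unfolding MA_def c_def c'_def by (auto split: if_splits)
    have "(i + k) mod d = (i' + k') mod d" using eq True T' unfolding MA_def c_def c'_def by auto
    hence d1: "d dvd ((i + k) - (i' + k'))" by (rule modeq_dvd)
    have d2: "d dvd (c - (k - i))" "d dvd (c' - (k' - i'))" using dc dvdD_d by auto
    show ?thesis
    proof (cases "i = i'")
      case True
      have "c - c' = (c - (k - i)) - (c' - (k' - i')) + ((i + k) - (i' + k'))" using True by simp
      hence "d dvd (c - c')" using d1 d2 by (metis dvd_add dvd_diff)
      hence "c - c' = 0" using dvd_small[of d "c - c'"] T' \<open>h \<le> c \<and> c < h + d\<close> by linarith
      hence "k - k' = (c' - (k' - i')) - (c - (k - i))" using True by simp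
      hence "D dvd (k - k')" using dc by (metis dvd_diff)
      hence "k - k' = 0" using dvd_small[of D "k - k'"] r by linarith
      thus ?thesis using True by simp
    next
      case False
      hence kk: "k = k'" using same by simp
      have "c - c' = (c - (k - i)) - (c' - (k' - i')) - ((i + k) - (i' + k'))" using kk by simp
      hence "d dvd (c - c')" using d1 d2 by (metis dvd_diff)
      hence "c - c' = 0" using dvd_small[of d "c - c'"] T' \<open>h \<le> c \<and> c < h + d\<close> by linarith
      hence "i - i' = (c - (k - i)) - (c' - (k' - i'))" using kk by simp
      hence "D dvd (i - i')" using dc by (metis dvd_diff)
      hence "i - i' = 0" using dvd_small[of D "i - i'"] r by linarith
      thus ?thesis using kk by simp
    qed
  next
    case False
    hence F': "\<not> (h \<le> c' \<and> c' < h + d)" using eq unfolding MA_def c_def c'_def by (auto split: if_splits)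
    have "(i + k + h + 1) mod D = (i' + k' + h + 1) mod D" using eq False F' unfolding MA_def c_def c'_def by auto
    hence d1: "D dvd ((i + k + h + 1) - (i' + k' + h + 1))" by (rule modeq_dvd)
    show ?thesis
    proof (cases "i = i'")
      case True
      hence "D dvd (k - k')" using d1 by simp
      hence "k - k' = 0" using dvd_small[of D "k - k'"] r by linarith
      thus ?thesis using True by simp
    next
      case False
      hence kk: "k = k'" using same by simp
      hence "D dvd (i - i')" using d1 by simp
      hence "i - i' = 0" using dvd_small[of D "i - i'"] r by linarith
      thus ?thesis using kk by simp
    qed
  qed
qed

end


context cons begin

lemma dleD: "d \<le> D"
proof -
  have "q \<ge> 1" using qpos by simp
  thus ?thesis using D_def dpos by (simp add: mult_le_cancel_left1)
qed

lemma rA_AB: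
  assumes r: "0 \<le> i" "i < D" "0 \<le> k" "k < D" "0 \<le> j" "j < d"
  shows "MA i k \<noteq> MAB i j"
proof
  assume eq: "MA i k = MAB i j"
  define c where "c = (k - i) mod D"
  define t where "t = (i - j) mod d"
  have cr: "0 \<le> c" "c < D" using Dpos c_def by auto
  have tr: "0 \<le> t" "t < d" using dpos t_def by auto
  have dc: "D dvd (c - (k - i))" using modd c_def by auto
  have nb: "\<not> (h \<le> c \<and> c < h + d)" using eq unfolding MA_def MAB_def c_def by (auto split: if_splits)
  have "(i + k + h + 1) mod D = (2*i - t) mod D" using eq nb unfolding MA_def MAB_def c_def t_def by auto
  hence d1: "D dvd ((i + k + h + 1) - (2*i - t))" by (rule modeq_dvd)
  define x where "x = c + h + 1 + t"
  have "x = ((i + k + h + 1) - (2*i - t)) + (c - (k - i))" using x_def by simp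
  hence dx: "D dvd x" using d1 dc by (metis dvd_add)
  show False
  proof (cases "c < h")
    case True
    hence "0 < x" "x < D" using x_def tr cr D_eq h_nonneg by linarith+
    thus False using dvd_small[OF dx] by linarith
  next
    case False
    hence "c \<ge> h + d" using nb by linarith
    hence "D < x" "x < 2*D" using x_def tr cr D_eq h_nonneg by linarith+
    thus False using dvd_between[OF dx] by linarith
  qed
qed

lemma rA_BB:
  assumes r: "0 \<le> j" "j < d" "0 \<le> j'" "j' < d"
    and eq: "MAB i j = MAB i j'"
  shows "j = j'"
proof -
  define t where "t = (i - j) mod d"
  define t' where "t' = (i - j') mod d"
  have tr: "0 \<le> t" "t < d" "0 \<le> t'" "t' < d" using dpos t_def t'_def by auto
  have "(2*i - t) mod D = (2*i - t') mod D" using eq unfolding MAB_def t_def t'_def by simp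
  hence "D dvd ((2*i - t) - (2*i - t'))" by (rule modeq_dvd)
  hence "D dvd (t' - t)" by simp
  hence "t' - t = 0" using dvd_small[of D "t' - t"] tr dleD by linarith
  hence "(i - j) mod d = (i - j') mod d" using t_def t'_def by simp
  hence "d dvd ((i - j) - (i - j'))" by (rule modeq_dvd)
  hence "d dvd (j' - j)" by simp
  hence "j' - j = 0" using dvd_small[of d "j' - j"] r by linarith
  thus ?thesis by simp
qed

lemma rB_AA:
  assumes r: "0 \<le> i" "i < D" "0 \<le> i'" "i' < D"
    and eq: "MBA j i = MBA j i'"
  shows "i = i'"
proof -
  define t where "t = (i + 1 - j) mod d"
  define t' where "t' = (i' + 1 - j) mod d"
  have tr: "0 \<le> t" "t < d" "0 \<le> t'" "t' < d" using dpos t_def t'_def by auto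
  have "(2*i + 1 - t) mod D = (2*i' + 1 - t') mod D" using eq unfolding MBA_def t_def t'_def by simp
  hence d1: "D dvd ((2*i + 1 - t) - (2*i' + 1 - t'))" by (rule modeq_dvd)
  hence d1': "d dvd ((2*i + 1 - t) - (2*i' + 1 - t'))" by (rule dvdD_d)
  have d2: "d dvd (t - (i + 1 - j))" "d dvd (t' - (i' + 1 - j))" using modd t_def t'_def by auto
  have "i - i' = ((2*i + 1 - t) - (2*i' + 1 - t')) + (t - (i + 1 - j)) - (t' - (i' + 1 - j))" by simp
  hence dii: "d dvd (i - i')" using d1' d2 by (metis dvd_add dvd_diff)
  have "t - t' = (t - (i + 1 - j)) - (t' - (i' + 1 - j)) + (i - i')" by simp
  hence "d dvd (t - t')" using dii d2 by (metis dvd_add dvd_diff)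
  hence tt: "t = t'" using dvd_small[of d "t - t'"] tr by linarith
  hence "D dvd (2 * (i - i'))" using d1 by (simp add: algebra_simps)
  hence "(d*q) dvd (2 * (i - i'))" using D_def by simp
  hence "(d*q) dvd (i - i')" using odd_cancel[OF qodd _ dii] by simp
  hence "D dvd (i - i')" using D_def by simp
  hence "i - i' = 0" using dvd_small[of D "i - i'"] r by linarith
  thus ?thesis by simp
qed

lemma cA_AB:
  assumes r: "0 \<le> i" "i < D" "0 \<le> k" "k < D" "0 \<le> j" "j < d"
  shows "MA i k \<noteq> MBA j k"
proof
  assume eq: "MA i k = MBA j k"
  define c where "c = (k - i) mod D"
  define t where "t = (k + 1 - j) mod d"
  have cr: "0 \<le> c" "c < D" using Dpos c_def by auto
  have tr: "0 \<le> t" "t < d" using dpos t_def by auto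
  have dc: "D dvd (c - (k - i))" using modd c_def by auto
  have nb: "\<not> (h \<le> c \<and> c < h + d)" using eq unfolding MA_def MBA_def c_def by (auto split: if_splits)
  have "(i + k + h + 1) mod D = (2*k + 1 - t) mod D" using eq nb unfolding MA_def MBA_def c_def t_def by auto
  hence d1: "D dvd ((i + k + h + 1) - (2*k + 1 - t))" by (rule modeq_dvd)
  define x where "x = h - c + t"
  have "x = ((i + k + h + 1) - (2*k + 1 - t)) - (c - (k - i))" using x_def by simp
  hence dx: "D dvd x" using d1 dc by (metis dvd_diff)
  show False
  proof (cases "c < h")
    case True
    hence "0 < x" "x < D" using x_def tr cr D_eq h_nonneg by linarith+
    thus False using dvd_small[OF dx] by linarith
  next
    case False
    hence "c \<ge> h + d" using nb by linarith
    hence "-D < x" "x < 0" using x_def tr cr D_eq h_nonneg by linarith+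
    thus False using dvd_small[OF dx] by linarith
  qed
qed

lemma cA_BB:
  assumes r: "0 \<le> j" "j < d" "0 \<le> j'" "j' < d"
    and eq: "MBA j k = MBA j' k"
  shows "j = j'"
proof -
  define t where "t = (k + 1 - j) mod d"
  define t' where "t' = (k + 1 - j') mod d"
  have tr: "0 \<le> t" "t < d" "0 \<le> t'" "t' < d" using dpos t_def t'_def by auto
  have "(2*k + 1 - t) mod D = (2*k + 1 - t') mod D" using eq unfolding MBA_def t_def t'_def by simp
  hence "D dvd ((2*k + 1 - t) - (2*k + 1 - t'))" by (rule modeq_dvd)
  hence "D dvd (t' - t)" by simp
  hence "t' - t = 0" using dvd_small[of D "t' - t"] tr dleD by linarith
  hence "(k + 1 - j) mod d = (k + 1 - j') mod d" using t_def t'_def by simp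
  hence "d dvd ((k + 1 - j) - (k + 1 - j'))" by (rule modeq_dvd)
  hence "d dvd (j' - j)" by simp
  hence "j' - j = 0" using dvd_small[of d "j' - j"] r by linarith
  thus ?thesis by simp
qed

lemma cB_AA:
  assumes r: "0 \<le> i" "i < D" "0 \<le> i'" "i' < D"
    and eq: "MAB i j = MAB i' j"
  shows "i = i'"
proof -
  define t where "t = (i - j) mod d"
  define t' where "t' = (i' - j) mod d"
  have tr: "0 \<le> t" "t < d" "0 \<le> t'" "t' < d" using dpos t_def t'_def by auto
  have "(2*i - t) mod D = (2*i' - t') mod D" using eq unfolding MAB_def t_def t'_def by simp
  hence d1: "D dvd ((2*i - t) - (2*i' - t'))" by (rule modeq_dvd)
  hence d1': "d dvd ((2*i - t) - (2*i' - t'))" by (rule dvdD_d)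
  have d2: "d dvd (t - (i - j))" "d dvd (t' - (i' - j))" using modd t_def t'_def by auto
  have "i - i' = ((2*i - t) - (2*i' - t')) + (t - (i - j)) - (t' - (i' - j))" by simp
  hence dii: "d dvd (i - i')" using d1' d2 by (metis dvd_add dvd_diff)
  have "t - t' = (t - (i - j)) - (t' - (i' - j)) + (i - i')" by simp
  hence "d dvd (t - t')" using dii d2 by (metis dvd_add dvd_diff)
  hence tt: "t = t'" using dvd_small[of d "t - t'"] tr by linarith
  hence "D dvd (2 * (i - i'))" using d1 by (simp add: algebra_simps)
  hence "(d*q) dvd (2 * (i - i'))" using D_def by simp
  hence "(d*q) dvd (i - i')" using odd_cancel[OF qodd _ dii] by simp
  hence "D dvd (i - i')" using D_def by simp
  hence "i - i' = 0" using dvd_small[of D "i - i'"] r by linarith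
  thus ?thesis by simp
qed

lemma BB_inj:
  assumes r: "0 \<le> j" "j < d" "0 \<le> j'" "j' < d"
    and eq: "(x + j) mod d = (x + j') mod d"
  shows "j = j'"
proof -
  have "d dvd ((x + j) - (x + j'))" using eq by (rule modeq_dvd)
  hence "d dvd (j - j')" by simp
  hence "j - j' = 0" using dvd_small[of d "j - j'"] r by linarith
  thus ?thesis by simp
qed

end


context cons begin

definition I :: "(bool \<times> int) set" where "I = {True} \<times> {0..<D} \<union> {False} \<times> {0..<d}"

definition M :: "bool \<times> int \<Rightarrow> bool \<times> int \<Rightarrow> bool \<times> int" where
  "M u v = (if fst u then (if fst v then MA (snd u) (snd v) else MAB (snd u) (snd v))
            else (if fst v then MBA (snd u) (snd v) else MBB (snd u) (snd v)))"

definition s :: "bool \<times> int \<Rightarrow> bool \<times> int" where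
  "s u = (if fst u then (True, (snd u + 1) mod D) else (False, (snd u + 1) mod d))"

lemma finI: "finite I" unfolding I_def by simp

lemma memI: "u \<in> I \<longleftrightarrow> (fst u \<and> 0 \<le> snd u \<and> snd u < D) \<or> (\<not> fst u \<and> 0 \<le> snd u \<and> snd u < d)"
  unfolding I_def by (cases u) auto

lemma Mcl: "u \<in> I \<Longrightarrow> v \<in> I \<Longrightarrow> M u v \<in> I"
  unfolding memI M_def MA_def MAB_def MBA_def MBB_def using Dpos dpos by auto

lemma rowinj: "u \<in> I \<Longrightarrow> inj_on (M u) I"
proof (rule inj_onI)
  fix v v' assume u: "u \<in> I" and v: "v \<in> I" and v': "v' \<in> I" and eq: "M u v = M u v'"
  obtain a i where ua: "u = (a, i)" by (cases u)
  obtain b k where vb: "v = (b, k)" by (cases v)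
  obtain b' k' where vb': "v' = (b', k')" by (cases v')
  show "v = v'"
  proof (cases a)
    case True
    hence ir: "0 \<le> i" "i < D" using u ua memI by auto
    show ?thesis
    proof (cases b; cases b')
      assume "b" "b'"
      thus ?thesis using MA_inj[of i k i k'] ir v v' eq True ua vb vb' memI by (auto simp: M_def)
    next
      assume "b" "\<not> b'"
      thus ?thesis using rA_AB[of i k k'] ir v v' eq True ua vb vb' memI by (auto simp: M_def)
    next
      assume "\<not> b" "b'"
      thus ?thesis using rA_AB[of i k' k] ir v v' eq True ua vb vb' memI by (auto simp: M_def)
    next
      assume "\<not> b" "\<not> b'"
      thus ?thesis using rA_BB[of k k' i] ir v v' eq True ua vb vb' memI by (auto simp: M_def)
    qed
  next
    case False
    show ?thesis
    proof (cases b; cases b')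
      assume "b" "b'"
      thus ?thesis using rB_AA[of k k' i] v v' eq False ua vb vb' memI by (auto simp: M_def)
    next
      assume "b" "\<not> b'"
      thus ?thesis using eq False ua vb vb' by (simp add: M_def MBA_def MBB_def)
    next
      assume "\<not> b" "b'"
      thus ?thesis using eq False ua vb vb' by (simp add: M_def MBA_def MBB_def)
    next
      assume "\<not> b" "\<not> b'"
      thus ?thesis using BB_inj[of k k' i] v v' eq False ua vb vb' memI by (auto simp: M_def MBB_def)
    qed
  qed
qed

lemma colinj: "v \<in> I \<Longrightarrow> inj_on (\<lambda>u. M u v) I"
proof (rule inj_onI)
  fix u u' assume v: "v \<in> I" and u: "u \<in> I" and u': "u' \<in> I" and eq: "M u v = M u' v"
  obtain a k where va: "v = (a, k)" by (cases v)
  obtain b i where ub: "u = (b, i)" by (cases u)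
  obtain b' i' where ub': "u' = (b', i')" by (cases u')
  show "u = u'"
  proof (cases a)
    case True
    hence kr: "0 \<le> k" "k < D" using v va memI by auto
    show ?thesis
    proof (cases b; cases b')
      assume "b" "b'"
      thus ?thesis using MA_inj[of i k i' k] kr u u' eq True va ub ub' memI by (auto simp: M_def)
    next
      assume "b" "\<not> b'"
      thus ?thesis using cA_AB[of i k i'] kr u u' eq True va ub ub' memI by (auto simp: M_def)
    next
      assume "\<not> b" "b'"
      thus ?thesis using cA_AB[of i' k i] kr u u' eq True va ub ub' memI by (auto simp: M_def)
    next
      assume "\<not> b" "\<not> b'"
      thus ?thesis using cA_BB[of i i' k] kr u u' eq True va ub ub' memI by (auto simp: M_def)
    qed
  next
    case False
    show ?thesis
    proof (cases b; cases b')
      assume "b" "b'"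
      thus ?thesis using cB_AA[of i i' k] u u' eq False va ub ub' memI by (auto simp: M_def)
    next
      assume "b" "\<not> b'"
      thus ?thesis using eq False va ub ub' by (simp add: M_def MAB_def MBB_def)
    next
      assume "\<not> b" "b'"
      thus ?thesis using eq False va ub ub' by (simp add: M_def MAB_def MBB_def)
    next
      assume "\<not> b" "\<not> b'"
      thus ?thesis using BB_inj[of i i' k] u u' eq False va ub ub' memI by (auto simp: M_def MBB_def add.commute)
    qed
  qed
qed

end


context cons begin

lemma s_in: "u \<in> I \<Longrightarrow> s u \<in> I"
  unfolding memI s_def using Dpos dpos by auto

lemma s_surj: "u \<in> I \<Longrightarrow> \<exists>v\<in>I. s v = u"
proof -
  assume u: "u \<in> I"
  obtain a i where ua: "u = (a, i)" by (cases u)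
  show ?thesis
  proof (cases a)
    case True
    hence ir: "0 \<le> i" "i < D" using u ua memI by auto
    have "s (True, (i - 1) mod D) = (True, ((i - 1) mod D + 1) mod D)" by (simp add: s_def)
    also have "\<dots> = (True, i)" using ir by (simp add: mod_add_left_eq)
    finally show ?thesis using ua True Dpos by (intro bexI[of _ "(True, (i - 1) mod D)"]) (auto simp: memI)
  next
    case False
    hence ir: "0 \<le> i" "i < d" using u ua memI by auto
    have "s (False, (i - 1) mod d) = (False, ((i - 1) mod d + 1) mod d)" by (simp add: s_def)
    also have "\<dots> = (False, i)" using ir by (simp add: mod_add_left_eq)
    finally show ?thesis using ua False dpos by (intro bexI[of _ "(False, (i - 1) mod d)"]) (auto simp: memI)
  qed
qed

lemma modD_d: "(x mod D) mod d = x mod d"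
  using dD by (rule mod_mod_cancel)

lemma MA_comm:
  assumes r: "0 \<le> i" "i < D" "0 \<le> k" "k < D"
  shows "MA ((k + 1) mod D) i = s (MA i k)"
proof -
  define c where "c = (k - i) mod D"
  have cr: "0 \<le> c" "c < D" using Dpos c_def by auto
  have "(i - (k + 1) mod D) mod D = (i - (k + 1)) mod D" by (simp add: mod_diff_right_eq)
  also have "\<dots> = (D - 1 - c) mod D"
  proof -
    have "D dvd (c - (k - i))" using modd c_def by auto
    hence "D dvd ((i - (k + 1)) - (D - 1 - c))"
    proof -
      assume "D dvd (c - (k - i))"
      moreover have "(i - (k + 1)) - (D - 1 - c) = (c - (k - i)) - D" by simp
      ultimately show ?thesis by (metis dvd_diff dvd_refl)
    qed
    thus ?thesis by (simp add: mod_eq_dvd_iff)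
  qed
  also have "\<dots> = D - 1 - c" using cr by simp
  finally have c': "(i - (k + 1) mod D) mod D = D - 1 - c" .
  have iff: "(h \<le> D - 1 - c \<and> D - 1 - c < h + d) \<longleftrightarrow> (h \<le> c \<and> c < h + d)" using D_eq by linarith
  show ?thesis
  proof (cases "h \<le> c \<and> c < h + d")
    case True
    have l: "MA ((k + 1) mod D) i = (False, ((k + 1) mod D + i) mod d)"
      unfolding MA_def using c' iff True by simp
    have r2: "MA i k = (False, (i + k) mod d)" unfolding MA_def using True c_def by simp
    have "((k + 1) mod D + i) mod d = ((k + 1) mod D mod d + i) mod d" by (simp add: mod_add_left_eq)
    also have "\<dots> = ((k + 1) mod d + i) mod d" by (simp add: modD_d)
    also have "\<dots> = (k + 1 + i) mod d" by (simp add: mod_add_left_eq)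
    also have "\<dots> = ((i + k) mod d + 1) mod d" by (simp add: mod_add_left_eq mod_add_right_eq algebra_simps)
    finally show ?thesis using l r2 by (simp add: s_def)
  next
    case False
    have l: "MA ((k + 1) mod D) i = (True, ((k + 1) mod D + i + h + 1) mod D)"
      unfolding MA_def using c' iff False by simp
    have r2: "MA i k = (True, (i + k + h + 1) mod D)" unfolding MA_def using False c_def by simp
    have "((k + 1) mod D + i + h + 1) mod D = ((k + 1) mod D + (i + h + 1)) mod D" by (simp add: algebra_simps)
    also have "\<dots> = (k + 1 + (i + h + 1)) mod D" by (simp add: mod_add_left_eq)
    also have "\<dots> = ((i + k + h + 1) mod D + 1) mod D" by (simp add: mod_add_left_eq mod_add_right_eq algebra_simps)
    finally show ?thesis using l r2 by (simp add: s_def)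
  qed
qed

lemma AB_comm: "MBA ((j + 1) mod d) i = s (MAB i j)"
proof -
  have "(i + 1 - (j + 1) mod d) mod d = (i + 1 - (j + 1)) mod d" by (simp add: mod_diff_right_eq)
  hence t: "(i + 1 - (j + 1) mod d) mod d = (i - j) mod d" by simp
  have "(2 * i + 1 - (i - j) mod d) mod D = ((2 * i - (i - j) mod d) mod D + 1) mod D"
    by (simp add: mod_add_left_eq mod_add_right_eq algebra_simps)
  thus ?thesis unfolding MBA_def MAB_def s_def using t by simp
qed

lemma BA_comm: "MAB ((i + 1) mod D) j = s (MBA j i)"
proof -
  have "((i + 1) mod D - j) mod d = ((i + 1) mod D mod d - j) mod d" by (simp add: mod_diff_left_eq)
  also have "\<dots> = ((i + 1) mod d - j) mod d" by (simp add: modD_d)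
  also have "\<dots> = (i + 1 - j) mod d" by (simp add: mod_diff_left_eq)
  finally have t: "((i + 1) mod D - j) mod d = (i + 1 - j) mod d" .
  define t0 where "t0 = (i + 1 - j) mod d"
  have "(2 * ((i + 1) mod D) - t0) mod D = ((2 * ((i + 1) mod D)) mod D - t0) mod D"
    by (simp add: mod_diff_left_eq)
  also have "\<dots> = ((2 * (i + 1)) mod D - t0) mod D" by (simp add: mod_mult_right_eq)
  also have "\<dots> = (2 * (i + 1) - t0) mod D" by (simp add: mod_diff_left_eq)
  also have "\<dots> = ((2 * i + 1 - t0) mod D + 1) mod D" by (simp add: mod_add_left_eq mod_add_right_eq algebra_simps)
  finally show ?thesis unfolding MBA_def MAB_def s_def using t t0_def by simp
qed

lemma BB_comm: "MBB ((j' + 1) mod d) j = s (MBB j j')"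
proof -
  have "((j' + 1) mod d + j) mod d = ((j + j') mod d + 1) mod d"
    by (simp add: mod_add_left_eq mod_add_right_eq algebra_simps)
  thus ?thesis unfolding MBB_def s_def by simp
qed

lemma M_comm: "u \<in> I \<Longrightarrow> v \<in> I \<Longrightarrow> M (s v) u = s (M u v)"
proof -
  assume u: "u \<in> I" and v: "v \<in> I"
  obtain a i where ua: "u = (a, i)" by (cases u)
  obtain b k where vb: "v = (b, k)" by (cases v)
  show ?thesis
  proof (cases a; cases b)
    assume "a" "b"
    thus ?thesis using MA_comm[of i k] u v ua vb memI by (auto simp: M_def s_def)
  next
    assume "a" "\<not> b"
    thus ?thesis using AB_comm[of k i] ua vb by (auto simp: M_def s_def)
  next
    assume "\<not> a" "b"
    thus ?thesis using BA_comm[of k i] ua vb by (auto simp: M_def s_def)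
  next
    assume "\<not> a" "\<not> b"
    thus ?thesis using BB_comm[of k i] ua vb by (auto simp: M_def s_def)
  qed
qed

end


context cs2 begin

lemma suff:
  assumes dv: "d2 dvd d1" and od: "odd (d1 div d2)" and f0: "f = 0"
  shows "in_Par12 n id \<beta> \<beta>"
proof -
  define q where "q = d1 div d2"
  have d1q: "d1 = d2 * q" using dv q_def by simp
  have qpos: "q > 0" using d1q dd by (cases q) auto
  interpret C: cons "int d2" "int q"
    by unfold_locales (use dd od qpos q_def in auto)
  have CD: "C.D = int d1" unfolding C.D_def using d1q by simp
  obtain a where a: "a \<in> A" using cards dd by fastforce
  obtain b where b: "b \<in> B" using cards dd by fastforce
  have bijA: "bij_betw (\<lambda>i. (\<beta>^^i) a) {0..<d1} A" using cyc_facts(2)[OF permb cycs(1) cards(1) a] .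
  have bijB: "bij_betw (\<lambda>i. (\<beta>^^i) b) {0..<d2} B" using cyc_facts(2)[OF permb cycs(2) cards(2) b] .
  have Fe: "F = {}" using cardF' f0 finF by simp
  have nAB: "{1..n} = A \<union> B" using Fe AsubB unfolding F_def by auto
  define E where "E u = (if fst u then (\<beta>^^nat (snd u)) a else (\<beta>^^nat (snd u)) b)" for u :: "bool \<times> int"
  have EA: "u \<in> C.I \<Longrightarrow> fst u \<Longrightarrow> E u \<in> A" for u unfolding E_def using inA[OF a] by simp
  have EB: "u \<in> C.I \<Longrightarrow> \<not> fst u \<Longrightarrow> E u \<in> B" for u unfolding E_def using inB[OF b] by simp
  have bij: "bij_betw E C.I {1..n}"
    unfolding bij_betw_def
  proof
    show "inj_on E C.I"
    proof (rule inj_onI)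
      fix u v assume u: "u \<in> C.I" and v: "v \<in> C.I" and eq: "E u = E v"
      obtain x i where ux: "u = (x, i)" by (cases u)
      obtain y j where vy: "v = (y, j)" by (cases v)
      show "u = v"
      proof (cases x; cases y)
        assume "x" "y"
        hence r: "0 \<le> i" "i < int d1" "0 \<le> j" "j < int d1" using u v ux vy C.memI CD by auto
        have "(\<beta>^^nat i) a = (\<beta>^^nat j) a" using eq ux vy \<open>x\<close> \<open>y\<close> E_def by simp
        hence "nat i = nat j" using bijA r unfolding bij_betw_def inj_on_def by auto
        thus "u = v" using ux vy r \<open>x\<close> \<open>y\<close> by simp
      next
        assume "x" "\<not> y"
        thus "u = v" using EA[OF u] EB[OF v] eq ux vy AsubB by auto
      next
        assume "\<not> x" "y"
        thus "u = v" using EB[OF u] EA[OF v] eq ux vy AsubB by auto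
      next
        assume "\<not> x" "\<not> y"
        hence r: "0 \<le> i" "i < int d2" "0 \<le> j" "j < int d2" using u v ux vy C.memI by auto
        have "(\<beta>^^nat i) b = (\<beta>^^nat j) b" using eq ux vy \<open>\<not> x\<close> \<open>\<not> y\<close> E_def by simp
        hence "nat i = nat j" using bijB r unfolding bij_betw_def inj_on_def by auto
        thus "u = v" using ux vy r \<open>\<not> x\<close> \<open>\<not> y\<close> by simp
      qed
    qed
    show "E ` C.I = {1..n}"
    proof
      show "E ` C.I \<subseteq> {1..n}" using EA EB AsubB by blast
      show "{1..n} \<subseteq> E ` C.I"
      proof
        fix x assume "x \<in> {1..n}"
        hence "x \<in> A \<or> x \<in> B" using nAB by auto
        thus "x \<in> E ` C.I"
        proof
          assume "x \<in> A"
          then obtain m where m: "m < d1" "x = (\<beta>^^m) a" using bijA unfolding bij_betw_def by auto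
          have "(True, int m) \<in> C.I" using m CD C.memI by simp
          moreover have "E (True, int m) = x" using m E_def by simp
          ultimately show ?thesis by force
        next
          assume "x \<in> B"
          then obtain m where m: "m < d2" "x = (\<beta>^^m) b" using bijB unfolding bij_betw_def by auto
          have "(False, int m) \<in> C.I" using m C.memI by simp
          moreover have "E (False, int m) = x" using m E_def by simp
          ultimately show ?thesis by force
        qed
      qed
    qed
  qed
  have comm: "E (C.s u) = \<beta> (E u)" if u: "u \<in> C.I" for u
  proof -
    obtain x i where ux: "u = (x, i)" by (cases u)
    show ?thesis
    proof (cases x)
      case True
      hence r: "0 \<le> i" using u ux C.memI by auto
      have "nat ((i + 1) mod int d1) = Suc (nat i) mod d1" using r by (simp add: nat_mod_distrib nat_add_distrib)
      moreover have "(\<beta>^^(Suc (nat i) mod d1)) a = (\<beta>^^(Suc (nat i))) a"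
        by (rule funpow_mod_eq) (use powA[OF a, of d1] in simp)
      ultimately show ?thesis using ux True E_def C.s_def CD by simp
    next
      case False
      hence r: "0 \<le> i" using u ux C.memI by auto
      have "nat ((i + 1) mod int d2) = Suc (nat i) mod d2" using r by (simp add: nat_mod_distrib nat_add_distrib)
      moreover have "(\<beta>^^(Suc (nat i) mod d2)) b = (\<beta>^^(Suc (nat i))) b"
        by (rule funpow_mod_eq) (use powB[OF b, of d2] in simp)
      ultimately show ?thesis using ux False E_def C.s_def by simp
    qed
  qed
  define L where "L = {(E u, E v, E (C.M u v)) | u v. u \<in> C.I \<and> v \<in> C.I}"
  have lat: "latin_square n L"
    unfolding L_def by (rule latin_from_fun[OF bij C.finI C.Mcl C.rowinj C.colinj])
  have par: "paratopism12_image id \<beta> \<beta> L = L"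
    unfolding L_def by (rule para_from_fun[where \<beta>=\<beta> and E=E and s=C.s and M=C.M and I=C.I, OF C.s_in C.s_surj comm C.Mcl C.M_comm])
  have "autoparatopism12 n id \<beta> \<beta> L"
    unfolding autoparatopism12_def using par perm permutes_id by blast
  thus ?thesis unfolding in_Par12_def using lat by blast
qed

end

theorem theorem4p15:
  fixes d1 d2 f n :: nat and \<beta> :: "nat \<Rightarrow> nat"
  assumes "d1 > d2" and "d2 > 1"
    and "n = d1 + d2 + f"
    and "cycle_structure_2 n \<beta> d1 d2 f"
  shows "in_Par12 n id \<beta> \<beta> \<longleftrightarrow> (d2 dvd d1 \<and> odd (d1 div d2) \<and> f = 0)"
proof -
  obtain A B where AB: "\<beta> permutes {1..n}" "A \<subseteq> {1..n}" "B \<subseteq> {1..n}" "A \<inter> B = {}"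
    "card A = d1" "card B = d2" "cyclic_on \<beta> A" "cyclic_on \<beta> B"
    "card ({1..n} - (A \<union> B)) = f" "\<forall>x\<in>{1..n} - (A \<union> B). \<beta> x = x"
    using assms(4) unfolding cycle_structure_2_def by blast
  interpret cs2 n \<beta> d1 d2 f A B
    by unfold_locales (use AB assms in auto)
  show ?thesis
  proof
    assume "in_Par12 n id \<beta> \<beta>"
    then obtain L where L: "latin_square n L" "autoparatopism12 n id \<beta> \<beta> L"
      unfolding in_Par12_def by blast
    interpret cs2L n \<beta> d1 d2 f A B L
      by unfold_locales (use L in auto)
    show "d2 dvd d1 \<and> odd (d1 div d2) \<and> f = 0" using N2 N3 N4 by simp
  next
    assume "d2 dvd d1 \<and> odd (d1 div d2) \<and> f = 0"
    thus "in_Par12 n id \<beta> \<beta>" using suff by blast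
  qed
qed


end
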